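(* Consider the average-cost MDP described in the context, and let $\pi^\star(s)=\arg\min_{a\in\mathcal{A}(s)}Q(s,a)$ be the age-optimal policy. Fix $j\in\mathcal{I}$ and two states $s^1=\{(b_i^1,A_i^1,g_i^1,h_i^1)\}_{i\in\mathcal{I}}$ and $s^2=\{(b_i^2,A_i^2,g_i^2,h_i^2)\}_{i\in\mathcal{I}}$ such that (i) $A_j^2\ge A_j^1$, (ii) $A_i^2=A_i^1$ for all $i\neq j$, and (iii) $b_i^1=b_i^2$, $g_i^1=g_i^2$, $h_i^1=h_i^2$ for all $i\in\mathcal{I}$. If $\pi^\star(s^1)=T_j$, then $\pi^\star(s^2)=T_j$.
   Context: There are $N$ source nodes indexed by $\mathcal{I}=\{1,\dots,N\}$ and one destination. Time is slotted. The state of source $i$ is $s_i=(b_i,A_i,g_i,h_i)$, where $b_i\in\{0,1,\dots,b_{\max,i}\}$ is the discrete battery level (in energy quanta of $B_{\max,i}/b_{\max,i}$ joules), $A_i\in\{1,\dots,A_{\max,i}\}$ is the AoI of process $i$ at the destination, and $g_i,h_i$ are downlink/uplink channel power gains taking finitely many ordered values; the system state is $s=\{s_i\}_{i\in\mathcal{I}}$. Channel gains are i.i.d. over slots and independent of everything else, with pmfs $\mathbb{P}(g_i),\mathbb{P}(h_i)$. Actions $\mathcal{A}=\{H,T_1,\dots,T_N\}$ ($H$: energy transfer by destination; $T_i$: source $i$ transmits an update). Let $e_i^{\rm H}=\lfloor \frac{b_{\max,i}}{B_{\max,i}}\eta P g_i\rfloor$ and $e_i^{\rm T}=\lceil \frac{b_{\max,i}}{B_{\max,i}}\frac{\sigma^2}{h_i}(2^{\bar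 S}-1)\rceil$ with positive constants $\eta,P,\sigma^2,\bar S$; $T_i$ is feasible only if $b_i\ge e_i^{\rm T}$, and $\mathcal{A}(s)$ is the feasible action set. Transitions: $b_i'=b_i-e_i^{\rm T}$ if $a=T_i$, $b_i'=\min\{b_{\max,i},b_i+e_i^{\rm H}\}$ if $a=H$, else $b_i'=b_i$; $A_i'=1$ if $a=T_i$, else $A_i'=\min\{A_{\max,i},A_i+1\}$; $g_i',h_i'$ fresh draws; so $\mathbb{P}(s'\mid s,a)=\prod_i\mathbb{1}(b_i')\mathbb{1}(A_i')\mathbb{P}(g_i')\mathbb{P}(h_i')$. Cost per slot $\sum_i\theta_iA_i$, $\theta_i\ge0$, $\sum_i\theta_i=1$. $V$ and $\bar A^\star$ satisfy the Bellman equation $\bar A^\star+V(s)=\min_{a\in\mathcal{A}(s)}Q(s,a)$ with $Q(s,a)=\sum_i\theta_iA_i+\sum_{s'}\mathbb{P}(s'\mid s,a)V(s')$. *)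

theory Defs
  imports "HOL-Probability.Probability_Mass_Function" "HOL-Library.FuncSet"
begin

text \<open>State of the system: battery levels b, AoI values A, downlink gains g, uplink gains h,
  each as a function of the source index (extensional on the source set {1..N}).\<close>
type_synonym state = "(nat \<Rightarrow> nat) \<times> (nat \<Rightarrow> nat) \<times> (nat \<Rightarrow> real) \<times> (nat \<Rightarrow> real)"

datatype action = Harvest | Transmit nat

record aoi_sys =
  nsrc   :: nat
  bmax   :: "nat \<Rightarrow> nat"
  Bmax   :: "nat \<Rightarrow> real"
  Amax   :: "nat \<Rightarrow> nat"
  eta    :: real
  Ptx    :: real
  sigma2 :: real
  Sbar   :: real
  pg     :: "nat \<Rightarrow> real pmf"
  ph     :: "nat \<Rightarrow> real pmf"
  theta  :: "nat \<Rightarrow> real"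

definition srcs :: "aoi_sys \<Rightarrow> nat set" where
  "srcs M = {1..nsrc M}"

definition eH :: "aoi_sys \<Rightarrow> nat \<Rightarrow> real \<Rightarrow> nat" where
  "eH M i g = nat \<lfloor>real (bmax M i) / Bmax M i * eta M * Ptx M * g\<rfloor>"

definition eT :: "aoi_sys \<Rightarrow> nat \<Rightarrow> real \<Rightarrow> nat" where
  "eT M i h = nat \<lceil>real (bmax M i) / Bmax M i * (sigma2 M / h) * (2 powr Sbar M - 1)\<rceil>"

definition valid_sys :: "aoi_sys \<Rightarrow> bool" where
  "valid_sys M \<longleftrightarrow>
     eta M > 0 \<and> Ptx M > 0 \<and> sigma2 M > 0 \<and> Sbar M > 0 \<and>
     (\<forall>i\<in>srcs M. Bmax M i > 0 \<and> bmax M i > 0 \<and> Amax M i \<ge> 1 \<and>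
        finite (set_pmf (pg M i)) \<and> finite (set_pmf (ph M i)) \<and>
        set_pmf (pg M i) \<subseteq> {0..} \<and> set_pmf (ph M i) \<subseteq> {0<..} \<and>
        theta M i \<ge> 0) \<and>
     (\<Sum>i\<in>srcs M. theta M i) = 1"

definition states :: "aoi_sys \<Rightarrow> state set" where
  "states M = {(b, A, g, h).
      b \<in> (\<Pi>\<^sub>E i\<in>srcs M. {0..bmax M i}) \<and>
      A \<in> (\<Pi>\<^sub>E i\<in>srcs M. {1..Amax M i}) \<and>
      g \<in> (\<Pi>\<^sub>E i\<in>srcs M. set_pmf (pg M i)) \<and>
      h \<in> (\<Pi>\<^sub>E i\<in>srcs M. set_pmf (ph M i))}"

definition feasible :: "aoi_sys \<Rightarrow> state \<Rightarrow> action set" where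
  "feasible M s = (case s of (b, A, g, h) \<Rightarrow>
      {Harvest} \<union> {Transmit i | i. i \<in> srcs M \<and> eT M i (h i) \<le> b i})"

definition next_batt :: "aoi_sys \<Rightarrow> state \<Rightarrow> action \<Rightarrow> nat \<Rightarrow> nat" where
  "next_batt M s a = (case s of (b, A, g, h) \<Rightarrow>
     restrict (\<lambda>i. case a of
                 Transmit j \<Rightarrow> if i = j then b i - eT M i (h i) else b i
               | Harvest \<Rightarrow> min (bmax M i) (b i + eH M i (g i))) (srcs M))"

definition next_age :: "aoi_sys \<Rightarrow> state \<Rightarrow> action \<Rightarrow> nat \<Rightarrow> nat" where
  "next_age M s a = (case s of (b, A, g, h) \<Rightarrow>
     restrict (\<lambda>i. if a = Transmit i then 1 else min (Amax M i) (A i + 1)) (srcs M))"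

definition trans_prob :: "aoi_sys \<Rightarrow> state \<Rightarrow> action \<Rightarrow> state \<Rightarrow> real" where
  "trans_prob M s a s' = (case s' of (b', A', g', h') \<Rightarrow>
     (if b' = next_batt M s a \<and> A' = next_age M s a
      then (\<Prod>i\<in>srcs M. pmf (pg M i) (g' i) * pmf (ph M i) (h' i)) else 0))"

definition cost :: "aoi_sys \<Rightarrow> state \<Rightarrow> real" where
  "cost M s = (case s of (b, A, g, h) \<Rightarrow> \<Sum>i\<in>srcs M. theta M i * real (A i))"

definition Qval :: "aoi_sys \<Rightarrow> (state \<Rightarrow> real) \<Rightarrow> state \<Rightarrow> action \<Rightarrow> real" where
  "Qval M V s a = cost M s + (\<Sum>s'\<in>states M. trans_prob M s a s' * V s')"

definition bellman :: "aoi_sys \<Rightarrow> real \<Rightarrow> (state \<Rightarrow> real) \<Rightarrow> bool" where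
  "bellman M Abar V \<longleftrightarrow> (\<forall>s\<in>states M. Abar + V s = Min (Qval M V s ` feasible M s))"

definition opt_actions :: "aoi_sys \<Rightarrow> (state \<Rightarrow> real) \<Rightarrow> state \<Rightarrow> action set" where
  "opt_actions M V s = {a \<in> feasible M s. \<forall>a'\<in>feasible M s. Qval M V s a \<le> Qval M V s a'}"

end

theory Submission
  imports Defs
begin

definition Bset where "Bset M = (\<Pi>\<^sub>E i\<in>srcs M. {0..bmax M i})"
definition Aset where "Aset M = (\<Pi>\<^sub>E i\<in>srcs M. {1..Amax M i})"
definition Gset where "Gset M = (\<Pi>\<^sub>E i\<in>srcs M. set_pmf (pg M i))"
definition Hset where "Hset M = (\<Pi>\<^sub>E i\<in>srcs M. set_pmf (ph M i))"
definition Pr where "Pr M gh = (\<Prod>i\<in>srcs M. pmf (pg M i) (fst gh i) * pmf (ph M i) (snd gh i))"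

lemma states_eq: "states M = Bset M \<times> Aset M \<times> Gset M \<times> Hset M"
  unfolding states_def Bset_def Aset_def Gset_def Hset_def by auto

lemma finite_states:
  assumes "valid_sys M"
  shows "finite (Gset M \<times> Hset M)" "finite (states M)"
proof -
  have fs: "finite (srcs M)" by (simp add: srcs_def)
  have G: "finite (Gset M)" unfolding Gset_def
    using assms fs by (intro finite_PiE) (auto simp: valid_sys_def)
  have H: "finite (Hset M)" unfolding Hset_def
    using assms fs by (intro finite_PiE) (auto simp: valid_sys_def)
  have B: "finite (Bset M)" unfolding Bset_def using fs by (intro finite_PiE) auto
  have A: "finite (Aset M)" unfolding Aset_def using fs by (intro finite_PiE) auto
  show "finite (Gset M \<times> Hset M)" using G H by simp
  show "finite (states M)" unfolding states_eq using G H A B by simp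
qed

lemma sum_eq:
  assumes "valid_sys M"
  shows "(\<Sum>s'\<in>states M. trans_prob M s a s' * F s') =
    (if next_batt M s a \<in> Bset M \<and> next_age M s a \<in> Aset M
     then (\<Sum>gh\<in>Gset M \<times> Hset M. Pr M gh * F (next_batt M s a, next_age M s a, gh)) else 0)"
proof -
  define nb where "nb = next_batt M s a"
  define na where "na = next_age M s a"
  have "(\<Sum>s'\<in>states M. trans_prob M s a s' * F s') =
     (\<Sum>s'\<in>states M. if fst s' = nb \<and> fst (snd s') = na then Pr M (snd (snd s')) * F s' else 0)"
    by (rule sum.cong) (auto simp: trans_prob_def Pr_def nb_def na_def split: prod.splits)
  also have "\<dots> = (\<Sum>s'\<in>{s'\<in>states M. fst s' = nb \<and> fst (snd s') = na}. Pr M (snd (snd s')) * F s')"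
    using finite_states[OF assms] by (simp add: sum.inter_filter)
  also have "\<dots> = (if nb \<in> Bset M \<and> na \<in> Aset M
     then (\<Sum>gh\<in>Gset M \<times> Hset M. Pr M gh * F (nb, na, gh)) else 0)"
  proof (cases "nb \<in> Bset M \<and> na \<in> Aset M")
    case True
    have eq: "{s'\<in>states M. fst s' = nb \<and> fst (snd s') = na} = (\<lambda>gh. (nb, na, gh)) ` (Gset M \<times> Hset M)"
      using True unfolding states_eq by force
    have inj: "inj_on (\<lambda>gh. (nb, na, gh)) (Gset M \<times> Hset M)"
      by (auto simp: inj_on_def)
    show ?thesis using True unfolding eq by (simp add: sum.reindex[OF inj])
  next
    case False
    hence "{s'\<in>states M. fst s' = nb \<and> fst (snd s') = na} = {}" unfolding states_eq by auto
    then show ?thesis using False by (simp only: sum.empty if_False)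
  qed
  finally show ?thesis by (simp add: nb_def na_def)
qed

lemma Pr_nonneg: "Pr M gh \<ge> 0"
  unfolding Pr_def by (intro prod_nonneg) auto

lemma next_age_in:
  assumes "valid_sys M" "(b, A, g, h) \<in> states M"
  shows "next_age M (b, A, g, h) a \<in> Aset M"
  using assms unfolding next_age_def Aset_def states_def valid_sys_def
  by (auto simp: PiE_iff)

lemma ext_eq:
  assumes "(b, A1, g, h) \<in> states M" "(b, A2, g, h) \<in> states M" "j \<in> srcs M"
    "\<forall>i\<in>srcs M. i \<noteq> j \<longrightarrow> A2 i = A1 i"
  shows "A2 = A1(j := A2 j)"
proof
  fix i
  show "A2 i = (A1(j := A2 j)) i"
  proof (cases "i \<in> srcs M")
    case True then show ?thesis using assms(4) by auto
  next
    case False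
    have "A1 \<in> extensional (srcs M)" "A2 \<in> extensional (srcs M)"
      using assms(1,2) unfolding states_def by (auto simp: PiE_def)
    then show ?thesis using False assms(3) by (auto simp: extensional_def)
  qed
qed

lemma cost_diff:
  assumes "valid_sys M" "A1 j \<le> A2 j" "\<forall>i\<in>srcs M. i \<noteq> j \<longrightarrow> A2 i = A1 i"
  shows "cost M (b, A1, g, h) \<le> cost M (b, A2, g, h)"
  unfolding cost_def using assms
  by (auto simp: valid_sys_def intro!: sum_mono mult_left_mono)

lemma Qdiff:
  assumes valid: "valid_sys M" and j: "j \<in> srcs M"
    and s1: "(b, A1, g, h) \<in> states M" and s2: "(b, A2, g, h) \<in> states M"
    and le: "A1 j \<le> A2 j" and agree: "\<forall>i\<in>srcs M. i \<noteq> j \<longrightarrow> A2 i = A1 i"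
    and lt: "A1 j < Amax M j"
    and hmono: "\<And>b' A1' A2' g' h'. (b', A1', g', h') \<in> states M \<Longrightarrow> (b', A2', g', h') \<in> states M
       \<Longrightarrow> A1' j \<le> A2' j \<Longrightarrow> \<forall>i\<in>srcs M. i \<noteq> j \<longrightarrow> A2' i = A1' i \<Longrightarrow> A1 j < A1' j
       \<Longrightarrow> V (b', A1', g', h') \<le> V (b', A2', g', h')"
  shows "Qval M V (b, A1, g, h) a + (cost M (b, A2, g, h) - cost M (b, A1, g, h)) \<le> Qval M V (b, A2, g, h) a"
proof -
  let ?s1 = "(b, A1, g, h)" and ?s2 = "(b, A2, g, h)"
  have nb: "next_batt M ?s2 a = next_batt M ?s1 a"
    unfolding next_batt_def by simp
  define nb where "nb = next_batt M ?s1 a"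
  define na1 where "na1 = next_age M ?s1 a"
  define na2 where "na2 = next_age M ?s2 a"
  have in1: "na1 \<in> Aset M" unfolding na1_def by (rule next_age_in[OF valid s1])
  have in2: "na2 \<in> Aset M" unfolding na2_def by (rule next_age_in[OF valid s2])
  have "(\<Sum>s'\<in>states M. trans_prob M ?s1 a s' * V s') \<le> (\<Sum>s'\<in>states M. trans_prob M ?s2 a s' * V s')"
  proof (cases "a = Transmit j")
    case True
    have "next_age M ?s1 a = next_age M ?s2 a"
      unfolding next_age_def using True agree by (auto simp: restrict_def)
    then have "trans_prob M ?s1 a = trans_prob M ?s2 a"
      unfolding trans_prob_def using nb by (auto simp: fun_eq_iff)
    then show ?thesis by simp
  next
    case False
    have na1j: "na1 j = Suc (A1 j)" unfolding na1_def next_age_def using j False lt by auto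
    have agn: "\<forall>i\<in>srcs M. i \<noteq> j \<longrightarrow> na2 i = na1 i"
      unfolding na1_def na2_def next_age_def using agree by auto
    have lej: "na1 j \<le> na2 j"
      unfolding na1_def na2_def next_age_def using j le by auto
    show ?thesis
    proof (cases "nb \<in> Bset M")
      case True
      have "(\<Sum>gh\<in>Gset M \<times> Hset M. Pr M gh * V (nb, na1, gh)) \<le> (\<Sum>gh\<in>Gset M \<times> Hset M. Pr M gh * V (nb, na2, gh))"
      proof (rule sum_mono, rule mult_left_mono[OF _ Pr_nonneg])
        fix gh assume gh: "gh \<in> Gset M \<times> Hset M"
        obtain g' h' where ghe: "gh = (g', h')" by (cases gh)
        have st1: "(nb, na1, g', h') \<in> states M" using True in1 gh ghe unfolding states_eq by auto
        have st2: "(nb, na2, g', h') \<in> states M" using True in2 gh ghe unfolding states_eq by auto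
        show "V (nb, na1, gh) \<le> V (nb, na2, gh)" unfolding ghe
          by (rule hmono[OF st1 st2 lej agn]) (simp add: na1j)
      qed
      then show ?thesis
        using True in1 in2 by (simp add: sum_eq[OF valid] nb na1_def na2_def nb_def)
    next
      case False
      then show ?thesis by (simp add: sum_eq[OF valid] nb nb_def)
    qed
  qed
  then show ?thesis unfolding Qval_def by simp
qed

lemma Qeq:
  assumes j: "j \<in> srcs M" and agree: "\<forall>i\<in>srcs M. i \<noteq> j \<longrightarrow> A2 i = A1 i"
  shows "Qval M V (b, A2, g, h) (Transmit j) = Qval M V (b, A1, g, h) (Transmit j) + (cost M (b, A2, g, h) - cost M (b, A1, g, h))"
proof -
  let ?s1 = "(b, A1, g, h)" and ?s2 = "(b, A2, g, h)" and ?a = "Transmit j"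
  have nb: "next_batt M ?s2 ?a = next_batt M ?s1 ?a"
    unfolding next_batt_def by simp
  have "next_age M ?s1 ?a = next_age M ?s2 ?a"
    unfolding next_age_def using agree by (auto simp: restrict_def)
  then have "trans_prob M ?s1 ?a = trans_prob M ?s2 ?a"
    unfolding trans_prob_def using nb by (auto simp: fun_eq_iff)
  then show ?thesis unfolding Qval_def by simp
qed

lemma feasible_fin: "finite (feasible M s)" "Harvest \<in> feasible M s"
proof -
  obtain b A g h where s: "s = (b, A, g, h)" by (cases s)
  have "feasible M s \<subseteq> insert Harvest (Transmit ` srcs M)"
    unfolding feasible_def s by auto
  then show "finite (feasible M s)" by (rule finite_subset) (simp add: srcs_def)
  show "Harvest \<in> feasible M s" unfolding feasible_def s by auto
qed

lemma feasible_same: "feasible M (b, A1, g, h) = feasible M (b, A2, g, h)"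
  unfolding feasible_def by simp

lemma V_mono_aux:
  assumes valid: "valid_sys M" and bell: "bellman M Abar V" and j: "j \<in> srcs M"
  shows "\<forall>b A1 A2 g h. Amax M j - A1 j = n \<longrightarrow> (b, A1, g, h) \<in> states M \<longrightarrow> (b, A2, g, h) \<in> states M
     \<longrightarrow> A1 j \<le> A2 j \<longrightarrow> (\<forall>i\<in>srcs M. i \<noteq> j \<longrightarrow> A2 i = A1 i) \<longrightarrow> V (b, A1, g, h) \<le> V (b, A2, g, h)"
proof (induction n rule: less_induct)
  case (less n)
  show ?case
  proof (intro allI impI)
    fix b A1 A2 g h
    assume n: "Amax M j - A1 j = n" and s1: "(b, A1, g, h) \<in> states M" and s2: "(b, A2, g, h) \<in> states M"
      and le: "A1 j \<le> A2 j" and agree: "\<forall>i\<in>srcs M. i \<noteq> j \<longrightarrow> A2 i = A1 i"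
    have A2e: "A2 = A1(j := A2 j)" by (rule ext_eq[OF s1 s2 j agree])
    have A2le: "A2 j \<le> Amax M j" using s2 j unfolding states_def by auto
    show "V (b, A1, g, h) \<le> V (b, A2, g, h)"
    proof (cases "A1 j < Amax M j")
      case False
      then have "A2 j = A1 j" using le A2le by auto
      then have "A2 = A1" using A2e by simp
      then show ?thesis by simp
    next
      case lt: True
      have hmono: "V (b', A1', g', h') \<le> V (b', A2', g', h')"
        if "(b', A1', g', h') \<in> states M" "(b', A2', g', h') \<in> states M"
          "A1' j \<le> A2' j" "\<forall>i\<in>srcs M. i \<noteq> j \<longrightarrow> A2' i = A1' i" "A1 j < A1' j" for b' A1' A2' g' h'
      proof -
        have "Amax M j - A1' j < n" using n lt that(5) by linarith
        then show ?thesis using less.IH that by blast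
      qed
      let ?F = "feasible M (b, A1, g, h)"
      have F2: "feasible M (b, A2, g, h) = ?F" by (rule feasible_same)
      have fin: "finite ?F" "?F \<noteq> {}" using feasible_fin[of M "(b, A1, g, h)"] by auto
      have b1: "Abar + V (b, A1, g, h) = Min (Qval M V (b, A1, g, h) ` ?F)"
        using bell s1 unfolding bellman_def by auto
      have b2: "Abar + V (b, A2, g, h) = Min (Qval M V (b, A2, g, h) ` ?F)"
        using bell s2 F2 unfolding bellman_def by auto
      obtain a where a: "a \<in> ?F" "Min (Qval M V (b, A2, g, h) ` ?F) = Qval M V (b, A2, g, h) a"
      proof -
        have "Min (Qval M V (b, A2, g, h) ` ?F) \<in> Qval M V (b, A2, g, h) ` ?F"
          using fin by (intro Min_in) auto
        then show ?thesis using that by blast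
      qed
      have "Min (Qval M V (b, A1, g, h) ` ?F) \<le> Qval M V (b, A1, g, h) a"
        using fin a by auto
      also have "\<dots> \<le> Qval M V (b, A2, g, h) a"
        using Qdiff[where V=V, OF valid j s1 s2 le agree lt hmono, of a] cost_diff[OF valid le agree, of b g h] by linarith
      finally show ?thesis using b1 b2 a by linarith
    qed
  qed
qed

lemma V_mono:
  assumes "valid_sys M" "bellman M Abar V" "j \<in> srcs M"
    "(b, A1, g, h) \<in> states M" "(b, A2, g, h) \<in> states M" "A1 j \<le> A2 j"
    "\<forall>i\<in>srcs M. i \<noteq> j \<longrightarrow> A2 i = A1 i"
  shows "V (b, A1, g, h) \<le> V (b, A2, g, h)"
  using V_mono_aux[OF assms(1-3)] assms(4-) by blast

theorem theorem1:
  fixes M :: aoi_sys and Abar :: real and V :: "state \<Rightarrow> real"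
    and j :: nat and b A1 A2 :: "nat \<Rightarrow> nat" and g h :: "nat \<Rightarrow> real"
  assumes "valid_sys M"
    and "bellman M Abar V"
    and "j \<in> srcs M"
    and "(b, A1, g, h) \<in> states M"
    and "(b, A2, g, h) \<in> states M"
    and "A2 j \<ge> A1 j"
    and "\<forall>i\<in>srcs M. i \<noteq> j \<longrightarrow> A2 i = A1 i"
    and "Transmit j \<in> opt_actions M V (b, A1, g, h)"
  shows "Transmit j \<in> opt_actions M V (b, A2, g, h)"
proof (cases "A1 j < Amax M j")
  case False
  have A2e: "A2 = A1(j := A2 j)" by (rule ext_eq[OF assms(4,5,3,7)])
  have A2le: "A2 j \<le> Amax M j" using assms(5,3) unfolding states_def by auto
  have "A2 j = A1 j" using A2le False assms(6) by simp
  then have "A2 = A1" using A2e by simp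
  then show ?thesis using assms(8) by simp
next
  case lt: True
  let ?F = "feasible M (b, A1, g, h)"
  have F2: "feasible M (b, A2, g, h) = ?F" by (rule feasible_same)
  have T: "Transmit j \<in> ?F" "\<forall>a'\<in>?F. Qval M V (b, A1, g, h) (Transmit j) \<le> Qval M V (b, A1, g, h) a'"
    using assms(8) unfolding opt_actions_def by auto
  have hmono: "V (b', A1', g', h') \<le> V (b', A2', g', h')"
    if "(b', A1', g', h') \<in> states M" "(b', A2', g', h') \<in> states M"
      "A1' j \<le> A2' j" "\<forall>i\<in>srcs M. i \<noteq> j \<longrightarrow> A2' i = A1' i" "A1 j < A1' j" for b' A1' A2' g' h'
    using V_mono[OF assms(1-3) that(1-4)] .
  have "\<forall>a'\<in>?F. Qval M V (b, A2, g, h) (Transmit j) \<le> Qval M V (b, A2, g, h) a'"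
  proof
    fix a' assume a': "a' \<in> ?F"
    show "Qval M V (b, A2, g, h) (Transmit j) \<le> Qval M V (b, A2, g, h) a'"
      using Qeq[OF assms(3,7), of V b g h] T(2) a'
        Qdiff[where V=V, OF assms(1,3,4,5,6,7) lt hmono, of a'] by fastforce
  qed
  then show ?thesis using T(1) F2 unfolding opt_actions_def by auto
qed

end
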